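(* Let $K$ be a field, $S=K[x_1,\dots,x_n]$, $A\subseteq\{1,\dots,n\}$ and $f=\prod_{j\in A}x_j$. Then $\operatorname{sdepth}(S_f)=n$.
   Context: $S_f=K[x_1,\dots,x_n,x_j^{-1}:j\in A]$, with $K$-basis the monomials $x_1^{a_1}\cdots x_n^{a_n}$, $a_j\in\mathbb Z$ for $j\in A$, $a_j\in\mathbb N$ otherwise. A Stanley space of $S_f$ is $uK[Z]$, the $K$-span of all $uw$ ($w$ a monomial in the elements of $Z$), where $u$ is a monomial, $Z\subseteq\{x_1,\dots,x_n\}\cup\{x_j^{-1}:j\in A\}$ with $\{x_j,x_j^{-1}\}\not\subseteq Z$ for all $j\in A$, and $uK[Z]$ is a free $K[Z]$-module; its dimension is $|Z|$. A Stanley decomposition $\mathcal D$ is a finite direct sum of Stanley spaces equal to $S_f$; $\operatorname{sdepth}\mathcal D$ is the minimal dimension of its spaces and $\operatorname{sdepth}(S_f)$ the maximum of $\operatorname{sdepth}\mathcal D$ over all Stanley decompositions. *)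

theory Defs
  imports Main
begin

text \<open>Monomials of S_f = K[x_1..x_n, x_j^-1 : j in A] are identified with their exponent
vectors a :: nat => int, supported on {1..n}, with a j >= 0 for j not in A.
Elements of S_f are finitely supported K-valued functions on these exponent vectors
(coefficient functions). A generator (j, True) stands for x_j, (j, False) for x_j^-1.\<close>

definition mon_set :: "nat \<Rightarrow> nat set \<Rightarrow> (nat \<Rightarrow> int) set" where
  "mon_set n A = {a. (\<forall>j. j \<notin> {1..n} \<longrightarrow> a j = 0) \<and> (\<forall>j\<in>{1..n} - A. 0 \<le> a j)}"

definition Sf :: "nat \<Rightarrow> nat set \<Rightarrow> ((nat \<Rightarrow> int) \<Rightarrow> 'k::field) set" where
  "Sf n A = {p. finite {a. p a \<noteq> 0} \<and> {a. p a \<noteq> 0} \<subseteq> mon_set n A}"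

definition gexp :: "nat \<times> bool \<Rightarrow> nat \<Rightarrow> int" where
  "gexp z = (\<lambda>i. if i = fst z then (if snd z then 1 else -1) else 0)"

text \<open>exponent vector of u * prod_{z in Z} z^(c z)\<close>
definition zprod :: "(nat \<Rightarrow> int) \<Rightarrow> (nat \<times> bool) set \<Rightarrow> (nat \<times> bool \<Rightarrow> nat) \<Rightarrow> nat \<Rightarrow> int" where
  "zprod u Z c = (\<lambda>i. u i + (\<Sum>z\<in>Z. int (c z) * gexp z i))"

definition zexps :: "(nat \<times> bool) set \<Rightarrow> (nat \<times> bool \<Rightarrow> nat) set" where
  "zexps Z = {c. \<forall>z. z \<notin> Z \<longrightarrow> c z = 0}"

definition stanley_space :: "(nat \<Rightarrow> int) \<Rightarrow> (nat \<times> bool) set \<Rightarrow> ((nat \<Rightarrow> int) \<Rightarrow> 'k::field) set" where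
  "stanley_space u Z = {p. finite {a. p a \<noteq> 0} \<and> {a. p a \<noteq> 0} \<subseteq> zprod u Z ` zexps Z}"

text \<open>Admissibility of (u, Z): u a monomial of S_f, Z a set of variables/inverse variables
not containing both x_j and x_j^-1, and u K[Z] free over K[Z] (the monomials u w,
w ranging over monomials in Z, are pairwise distinct).\<close>
definition is_stanley_space :: "nat \<Rightarrow> nat set \<Rightarrow> (nat \<Rightarrow> int) \<Rightarrow> (nat \<times> bool) set \<Rightarrow> bool" where
  "is_stanley_space n A u Z \<longleftrightarrow>
     u \<in> mon_set n A \<and>
     Z \<subseteq> ({1..n} \<times> {True}) \<union> (A \<times> {False}) \<and>
     (\<forall>j\<in>A. \<not> ((j, True) \<in> Z \<and> (j, False) \<in> Z)) \<and>
     inj_on (zprod u Z) (zexps Z)"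

definition stanley_decomp :: "'k::field itself \<Rightarrow> nat \<Rightarrow> nat set
    \<Rightarrow> ((nat \<Rightarrow> int) \<times> (nat \<times> bool) set) list \<Rightarrow> bool" where
  "stanley_decomp _ n A D \<longleftrightarrow>
     (\<forall>d\<in>set D. is_stanley_space n A (fst d) (snd d)) \<and>
     (\<forall>d\<in>set D. (stanley_space (fst d) (snd d) :: ((nat \<Rightarrow> int) \<Rightarrow> 'k) set) \<subseteq> Sf n A) \<and>
     (\<forall>p \<in> (Sf n A :: ((nat \<Rightarrow> int) \<Rightarrow> 'k) set).
        \<exists>!ps. length ps = length D \<and>
              (\<forall>i<length D. ps ! i \<in> stanley_space (fst (D ! i)) (snd (D ! i))) \<and>
              p = (\<lambda>a. \<Sum>i<length D. (ps ! i) a))"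

definition sdepth_decomp :: "((nat \<Rightarrow> int) \<times> (nat \<times> bool) set) list \<Rightarrow> nat" where
  "sdepth_decomp D = Min ((\<lambda>d. card (snd d)) ` set D)"

definition sdepth_Sf :: "'k::field itself \<Rightarrow> nat \<Rightarrow> nat set \<Rightarrow> nat" where
  "sdepth_Sf K n A = Max {sdepth_decomp D | D. stanley_decomp K n A D}"

end

theory Submission
  imports Defs
begin


definition ub :: "nat \<Rightarrow> (nat \<Rightarrow> bool) \<Rightarrow> nat \<Rightarrow> int" where
  "ub n b = (\<lambda>j. if j \<in> {1..n} \<and> \<not> b j then -1 else 0)"
definition Zb :: "nat \<Rightarrow> (nat \<Rightarrow> bool) \<Rightarrow> (nat \<times> bool) set" where
  "Zb n b = (\<lambda>j. (j, b j)) ` {1..n}"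
definition Mb :: "nat \<Rightarrow> (nat \<Rightarrow> bool) \<Rightarrow> (nat \<Rightarrow> int) set" where
  "Mb n b = {a. (\<forall>j. j \<notin> {1..n} \<longrightarrow> a j = 0) \<and> (\<forall>j\<in>{1..n}. if b j then a j \<ge> 0 else a j \<le> -1)}"

lemma zprod_Zb:
  "zprod (ub n b) (Zb n b) c i = ub n b i + (if i \<in> {1..n} then int (c (i, b i)) * (if b i then 1 else -1) else 0)"
proof -
  have inj: "inj_on (\<lambda>j. (j, b j)) {1..n}" by (auto simp: inj_on_def)
  have "(\<Sum>z\<in>Zb n b. int (c z) * gexp z i) = (\<Sum>j\<in>{1..n}. int (c (j, b j)) * gexp (j, b j) i)"
    unfolding Zb_def by (subst sum.reindex[OF inj]) (simp add: comp_def)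
  also have "\<dots> = (\<Sum>j\<in>{1..n}. if i = j then int (c (i, b i)) * (if b i then 1 else -1) else 0)"
    by (rule sum.cong) (auto simp: gexp_def)
  also have "\<dots> = (if i \<in> {1..n} then int (c (i, b i)) * (if b i then 1 else -1) else 0)"
    by (simp add: sum.delta)
  finally show ?thesis by (simp add: zprod_def)
qed

lemma zprod_Zb2:
  "zprod (ub n b) (Zb n b) c i = (if i \<in> {1..n} then (if b i then int (c (i, b i)) else -1 - int (c (i, b i))) else 0)"
  unfolding zprod_Zb by (simp add: ub_def)

lemma image_Zb: "zprod (ub n b) (Zb n b) ` zexps (Zb n b) = Mb n b"
proof
  show "zprod (ub n b) (Zb n b) ` zexps (Zb n b) \<subseteq> Mb n b"
  proof
    fix a assume "a \<in> zprod (ub n b) (Zb n b) ` zexps (Zb n b)"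
    then obtain c where a: "a = zprod (ub n b) (Zb n b) c" by blast
    show "a \<in> Mb n b" unfolding Mb_def a zprod_Zb2 by auto
  qed
  show "Mb n b \<subseteq> zprod (ub n b) (Zb n b) ` zexps (Zb n b)"
  proof
    fix a assume a: "a \<in> Mb n b"
    define c where "c = (\<lambda>z. if z \<in> Zb n b then (if snd z then nat (a (fst z)) else nat (- a (fst z) - 1)) else 0)"
    have "c \<in> zexps (Zb n b)" by (simp add: c_def zexps_def)
    moreover have "zprod (ub n b) (Zb n b) c = a"
    proof
      fix i
      show "zprod (ub n b) (Zb n b) c i = a i"
      proof (cases "i \<in> {1..n}")
        case True
        have "(i, b i) \<in> Zb n b" using True by (simp add: Zb_def)
        moreover have ai: "if b i then a i \<ge> 0 else a i \<le> -1" using a True unfolding Mb_def by blast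
        ultimately show ?thesis using True unfolding zprod_Zb2 c_def by (cases "b i") auto
      next
        case False then show ?thesis using a unfolding zprod_Zb2 if_not_P[OF False] by (simp add: Mb_def)
      qed
    qed
    ultimately show "a \<in> zprod (ub n b) (Zb n b) ` zexps (Zb n b)" by blast
  qed
qed

lemma inj_Zb: "inj_on (zprod (ub n b) (Zb n b)) (zexps (Zb n b))"
proof (rule inj_onI)
  fix c d assume c: "c \<in> zexps (Zb n b)" and d: "d \<in> zexps (Zb n b)"
    and eq: "zprod (ub n b) (Zb n b) c = zprod (ub n b) (Zb n b) d"
  show "c = d"
  proof
    fix z
    show "c z = d z"
    proof (cases "z \<in> Zb n b")
      case True
      then obtain j where j: "j \<in> {1..n}" "z = (j, b j)" unfolding Zb_def by blast
      have "zprod (ub n b) (Zb n b) c j = zprod (ub n b) (Zb n b) d j" using fun_cong[OF eq, of j] .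
      then have "(if b j then int (c (j, b j)) else -1 - int (c (j, b j))) = (if b j then int (d (j, b j)) else -1 - int (d (j, b j)))"
        unfolding zprod_Zb2 if_P[OF j(1)] .
      then have "c (j, b j) = d (j, b j)" by (cases "b j") simp_all
      then show ?thesis using j(2) by simp
    next
      case False
      have "c z = 0" using c False unfolding zexps_def mem_Collect_eq by metis
      moreover have "d z = 0" using d False unfolding zexps_def mem_Collect_eq by metis
      ultimately show ?thesis by simp
    qed
  qed
qed

lemma card_Zb: "card (Zb n b) = n"
proof -
  have "inj_on (\<lambda>j. (j, b j)) {1..n}" by (auto simp: inj_on_def)
  then show ?thesis by (simp add: Zb_def card_image)
qed



lemma decomp_from_partition:
  fixes D :: "((nat \<Rightarrow> int) \<times> (nat \<times> bool) set) list"
  defines "M \<equiv> \<lambda>i. zprod (fst (D!i)) (snd (D!i)) ` zexps (snd (D!i))"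
  assumes st: "\<forall>d\<in>set D. is_stanley_space n A (fst d) (snd d)"
  and sub: "\<forall>i<length D. M i \<subseteq> mon_set n A"
  and disj: "\<forall>i<length D. \<forall>j<length D. i \<noteq> j \<longrightarrow> M i \<inter> M j = {}"
  and cov: "\<forall>a\<in>mon_set n A. \<exists>i<length D. a \<in> M i"
  shows "stanley_decomp TYPE('k::field) n A D"
proof -
  have ss: "stanley_space (fst (D!i)) (snd (D!i)) = {p. finite {a. p a \<noteq> 0} \<and> {a. p a \<noteq> 0} \<subseteq> M i}" for i
    by (simp add: stanley_space_def M_def)
  have part2: "\<forall>d\<in>set D. (stanley_space (fst d) (snd d) :: ((nat \<Rightarrow> int) \<Rightarrow> 'k) set) \<subseteq> Sf n A"
  proof
    fix d assume "d \<in> set D"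
    then obtain i where i: "i < length D" "d = D!i" by (metis in_set_conv_nth)
    show "(stanley_space (fst d) (snd d) :: ((nat \<Rightarrow> int) \<Rightarrow> 'k) set) \<subseteq> Sf n A"
      using sub i unfolding i(2) ss Sf_def by blast
  qed
  have part3: "\<exists>!ps. length ps = length D \<and>
              (\<forall>i<length D. ps ! i \<in> stanley_space (fst (D ! i)) (snd (D ! i))) \<and>
              p = (\<lambda>a. \<Sum>i<length D. (ps ! i) a)" if p: "p \<in> (Sf n A :: ((nat \<Rightarrow> int) \<Rightarrow> 'k) set)" for p
  proof
    let ?ps = "map (\<lambda>i a. if a \<in> M i then p a else 0) [0..<length D]"
    have fin: "finite {a. p a \<noteq> 0}" and supp: "{a. p a \<noteq> 0} \<subseteq> mon_set n A" using p by (auto simp: Sf_def)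
    show "length ?ps = length D \<and>
              (\<forall>i<length D. ?ps ! i \<in> stanley_space (fst (D ! i)) (snd (D ! i))) \<and>
              p = (\<lambda>a. \<Sum>i<length D. (?ps ! i) a)"
    proof (intro conjI allI impI)
      show "length ?ps = length D" by simp
      fix i assume "i < length D"
      then show "?ps ! i \<in> stanley_space (fst (D ! i)) (snd (D ! i))"
        unfolding ss using fin by (auto elim: rev_finite_subset)
    next
      show "p = (\<lambda>a. \<Sum>i<length D. (?ps ! i) a)"
      proof
        fix a
        have "(\<Sum>i<length D. (?ps ! i) a) = (\<Sum>i<length D. if a \<in> M i then p a else 0)"
          by (rule sum.cong) auto
        also have "\<dots> = p a"
        proof (cases "p a = 0")
          case True then show ?thesis by (simp add: sum.neutral)
        next
          case False
          then have "a \<in> mon_set n A" using supp by auto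
          then obtain i where i: "i < length D" "a \<in> M i" using cov by blast
          have "(\<Sum>k<length D. if a \<in> M k then p a else 0) = (\<Sum>k<length D. if k = i then p a else 0)"
            using disj i by (intro sum.cong) auto
          also have "\<dots> = p a" using i by simp
          finally show ?thesis .
        qed
        finally show "p a = (\<Sum>i<length D. (?ps ! i) a)" by simp
      qed
    qed
    fix qs assume q: "length qs = length D \<and>
              (\<forall>i<length D. qs ! i \<in> stanley_space (fst (D ! i)) (snd (D ! i))) \<and>
              p = (\<lambda>a. \<Sum>i<length D. (qs ! i) a)"
    have z: "(qs ! i) a = 0" if "i < length D" "a \<notin> M i" for i a
      using q that unfolding ss by blast
    show "qs = ?ps"
    proof (rule nth_equalityI)
      show "length qs = length ?ps" using q by simp
      fix i assume "i < length qs"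
      then have i: "i < length D" using q by simp
      show "qs ! i = ?ps ! i"
      proof
        fix a
        show "(qs ! i) a = (?ps ! i) a"
        proof (cases "a \<in> M i")
          case True
          have "p a = (\<Sum>k<length D. (qs ! k) a)" using q by simp
          also have "\<dots> = (\<Sum>k<length D. if k = i then (qs ! i) a else 0)"
            using disj i True z by (intro sum.cong) (auto, metis disjoint_iff)
          also have "\<dots> = (qs ! i) a" using i by simp
          finally show ?thesis using True i by simp
        next
          case False then show ?thesis using z i by simp
        qed
      qed
    qed
  qed
  show ?thesis unfolding stanley_decomp_def using st part2 part3 by blast
qed



lemma Mb_disj:
  assumes "B \<subseteq> A" "B' \<subseteq> A" "A \<subseteq> {1..n}" "B \<noteq> B'"
  shows "Mb n (\<lambda>j. j \<notin> A - B) \<inter> Mb n (\<lambda>j. j \<notin> A - B') = {}"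
proof -
  obtain j where j: "j \<in> A" "(j \<in> B) \<noteq> (j \<in> B')" using assms by blast
  have jn: "j \<in> {1..n}" using j assms by blast
  show ?thesis
  proof (rule ccontr)
    assume "\<not> ?thesis"
    then obtain a where a: "a \<in> Mb n (\<lambda>j. j \<notin> A - B)" "a \<in> Mb n (\<lambda>j. j \<notin> A - B')" by blast
    have 1: "if j \<notin> A - B then a j \<ge> 0 else a j \<le> -1" using a(1) jn unfolding Mb_def by blast
    have 2: "if j \<notin> A - B' then a j \<ge> 0 else a j \<le> -1" using a(2) jn unfolding Mb_def by blast
    show False using 1 2 j by (cases "j \<in> B") auto
  qed
qed

lemma Mb_sub: "A \<subseteq> {1..n} \<Longrightarrow> Mb n (\<lambda>j. j \<notin> A - B) \<subseteq> mon_set n A"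
  unfolding Mb_def mon_set_def by auto

lemma ub_mon: "A \<subseteq> {1..n} \<Longrightarrow> ub n (\<lambda>j. j \<notin> A - B) \<in> mon_set n A"
  unfolding ub_def mon_set_def by auto

lemma Zb_sub: "Zb n (\<lambda>j. j \<notin> A - B) \<subseteq> ({1..n} \<times> {True}) \<union> (A \<times> {False})"
  unfolding Zb_def by auto

lemma Zb_noboth: "\<not> ((j, True) \<in> Zb n b \<and> (j, False) \<in> Zb n b)"
  unfolding Zb_def by auto

lemma cov_Mb:
  assumes "a \<in> mon_set n A"
  shows "a \<in> Mb n (\<lambda>j. j \<notin> A - {j\<in>A. a j \<ge> 0})"
  using assms unfolding mon_set_def Mb_def by auto

lemma card_le:
  assumes "is_stanley_space n A u Z" and AS: "A \<subseteq> {1..n}"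
  shows "card Z \<le> n"
proof -
  have Zs: "Z \<subseteq> ({1..n} \<times> {True}) \<union> (A \<times> {False})"
    and nb: "\<forall>j\<in>A. \<not> ((j, True) \<in> Z \<and> (j, False) \<in> Z)"
    using assms unfolding is_stanley_space_def by auto
  have "inj_on fst Z"
  proof (rule inj_onI)
    fix x y assume "x \<in> Z" "y \<in> Z" "fst x = fst y"
    moreover obtain j1 b1 j2 b2 where xy: "x = (j1, b1)" "y = (j2, b2)" by (cases x, cases y)
    ultimately have j: "j1 = j2" "(j1, b1) \<in> Z" "(j1, b2) \<in> Z" by auto
    show "x = y"
    proof (cases "b1 = b2")
      case True then show ?thesis using xy j by simp
    next
      case False
      then have "(j1, True) \<in> Z" "(j1, False) \<in> Z" using j by (cases b1; cases b2; simp)+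
      moreover then have "j1 \<in> A" using Zs by blast
      ultimately show ?thesis using nb by blast
    qed
  qed
  moreover have "fst ` Z \<subseteq> {1..n}"
  proof
    fix j assume "j \<in> fst ` Z"
    then obtain bb where "(j, bb) \<in> Z" by force
    then have "(j, bb) \<in> ({1..n} \<times> {True}) \<union> (A \<times> {False})" using Zs by blast
    then show "j \<in> {1..n}" using AS by blast
  qed
  ultimately have "card Z \<le> card {1..n}" by (rule card_inj_on_le) simp_all
  then show ?thesis by simp
qed

lemma decomp_nonempty:
  assumes "stanley_decomp TYPE('k::field) n A D"
  shows "D \<noteq> []"
proof
  assume D: "D = []"
  let ?p = "(\<lambda>a. if a = (\<lambda>_. 0) then 1 else 0) :: (nat \<Rightarrow> int) \<Rightarrow> 'k"
  have "?p \<in> Sf n A"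
  proof -
    have "{a. ?p a \<noteq> 0} = {\<lambda>_. 0}" by auto
    moreover have "(\<lambda>_. 0) \<in> mon_set n A" by (simp add: mon_set_def)
    ultimately show ?thesis unfolding Sf_def by simp
  qed
  then have "\<exists>!ps. length ps = length D \<and>
              (\<forall>i<length D. ps ! i \<in> stanley_space (fst (D ! i)) (snd (D ! i))) \<and>
              ?p = (\<lambda>a. \<Sum>i<length D. (ps ! i) a)"
    using assms unfolding stanley_decomp_def by blast
  then have "?p = (\<lambda>a. 0)" using D by auto
  then have "?p (\<lambda>_. 0) = 0" by metis
  then show False by simp
qed



theorem corollary2p3:
  fixes n :: nat and A :: "nat set"
  assumes "A \<subseteq> {1..n}"
  shows "sdepth_Sf TYPE('k::field) n A = n"
proof -
  have finA: "finite A" using assms finite_subset by blast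
  define xs where "xs = sorted_list_of_set A"
  have xs: "set xs = A" "distinct xs" using finA by (auto simp: xs_def)
  define Bs where "Bs = map set (subseqs xs)"
  have Bsd: "distinct Bs" unfolding Bs_def using xs(2) by (rule distinct_set_subseqs)
  have Bss: "set Bs = Pow A" unfolding Bs_def using subseqs_powset[of xs] xs(1) by simp
  define bf where "bf = (\<lambda>B j. j \<notin> A - B)"
  define D0 where "D0 = map (\<lambda>B. (ub n (bf B), Zb n (bf B))) Bs"
  have lenD: "length D0 = length Bs" by (simp add: D0_def)
  have D0i: "D0 ! i = (ub n (bf (Bs!i)), Zb n (bf (Bs!i)))" if "i < length Bs" for i
    using that by (simp add: D0_def)
  have Bsub: "Bs ! i \<subseteq> A" if "i < length Bs" for i
    using that Bss nth_mem by blast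
  have dec: "stanley_decomp TYPE('k) n A D0"
  proof (rule decomp_from_partition)
    show "\<forall>d\<in>set D0. is_stanley_space n A (fst d) (snd d)"
    proof
      fix d assume "d \<in> set D0"
      then obtain B where B: "B \<in> set Bs" "d = (ub n (bf B), Zb n (bf B))" by (auto simp: D0_def)
      show "is_stanley_space n A (fst d) (snd d)"
        unfolding is_stanley_space_def B(2) fst_conv snd_conv bf_def
        using ub_mon[OF assms] Zb_sub Zb_noboth inj_Zb by blast
    qed
    show "\<forall>i<length D0. zprod (fst (D0 ! i)) (snd (D0 ! i)) ` zexps (snd (D0 ! i)) \<subseteq> mon_set n A"
      using D0i lenD image_Zb Mb_sub[OF assms] unfolding bf_def by simp
    show "\<forall>i<length D0. \<forall>j<length D0. i \<noteq> j \<longrightarrow>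
        zprod (fst (D0 ! i)) (snd (D0 ! i)) ` zexps (snd (D0 ! i)) \<inter>
        zprod (fst (D0 ! j)) (snd (D0 ! j)) ` zexps (snd (D0 ! j)) = {}"
    proof (intro allI impI)
      fix i j assume ij: "i < length D0" "j < length D0" "i \<noteq> j"
      then have "Bs ! i \<noteq> Bs ! j" using Bsd lenD by (simp add: nth_eq_iff_index_eq)
      then show "zprod (fst (D0 ! i)) (snd (D0 ! i)) ` zexps (snd (D0 ! i)) \<inter>
        zprod (fst (D0 ! j)) (snd (D0 ! j)) ` zexps (snd (D0 ! j)) = {}"
        using ij lenD D0i image_Zb Mb_disj[OF Bsub Bsub assms] unfolding bf_def by simp
    qed
    show "\<forall>a\<in>mon_set n A. \<exists>i<length D0. a \<in> zprod (fst (D0 ! i)) (snd (D0 ! i)) ` zexps (snd (D0 ! i))"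
    proof
      fix a assume a: "a \<in> mon_set n A"
      have "{j\<in>A. a j \<ge> 0} \<in> set Bs" using Bss by auto
      then obtain i where i: "i < length Bs" "Bs ! i = {j\<in>A. a j \<ge> 0}" by (metis in_set_conv_nth)
      show "\<exists>i<length D0. a \<in> zprod (fst (D0 ! i)) (snd (D0 ! i)) ` zexps (snd (D0 ! i))"
        using i lenD D0i image_Zb cov_Mb[OF a] unfolding bf_def by (intro exI[of _ i]) simp
    qed
  qed
  have sd0: "sdepth_decomp D0 = n"
  proof -
    have "{} \<in> set Bs" using Bss by auto
    then have "set D0 \<noteq> {}" by (auto simp: D0_def)
    moreover have "\<forall>d\<in>set D0. card (snd d) = n" by (auto simp: D0_def card_Zb)
    moreover have "(\<lambda>d. card (snd d)) ` set D0 = (\<lambda>d. n) ` set D0" by (rule image_cong) (auto simp: D0_def card_Zb)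
    ultimately have "(\<lambda>d. card (snd d)) ` set D0 = {n}" by (metis image_constant_conv)
    then show ?thesis by (simp add: sdepth_decomp_def)
  qed
  have le: "sdepth_decomp D \<le> n" if "stanley_decomp TYPE('k) n A D" for D
  proof -
    have ne: "D \<noteq> []" using decomp_nonempty that by blast
    then obtain d where d: "d \<in> set D" by (cases D) auto
    have "is_stanley_space n A (fst d) (snd d)" using that d unfolding stanley_decomp_def by blast
    then have "card (snd d) \<le> n" using card_le assms by blast
    moreover have "sdepth_decomp D \<le> card (snd d)" unfolding sdepth_decomp_def
      using d by (intro Min_le) auto
    ultimately show ?thesis by linarith
  qed
  let ?S = "{sdepth_decomp D | D. stanley_decomp TYPE('k) n A D}"
  have "?S \<subseteq> {..n}" using le by auto
  then have fin: "finite ?S" using finite_subset by blast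
  have "n \<in> ?S" using dec sd0 by force
  show ?thesis unfolding sdepth_Sf_def
    by (rule Max_eqI[OF fin]) (use le \<open>n \<in> ?S\<close> in auto)
qed


end
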